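(* Let $(X,G)$ be a free exact $G$-odometer determined by a decreasing sequence $\{G_n\}_{n\ge0}$ of finite-index normal subgroups of $G$. Then: (1) for each $n$, the group $[[G]]_n$ is isomorphic to a semidirect product $G_n^{[G:G_n]}\rtimes S_{[G:G_n]}$, where $S_p$ denotes the symmetric group on $p$ letters (the normal factor $G_n^{[G:G_n]}$ corresponding to the elements of $[[G]]_n$ that leave each atom of $\mathcal P_n$ invariant, and $S_{[G:G_n]}$ to the permutation of the atoms of $\mathcal P_n$); (2) the topological full group $[[G]]$ is the increasing union (inductive limit) of these groups $[[G]]_n\cong G_n^{[G:G_n]}\rtimes S_{[G:G_n]}$.
   Context: Exact $G$-odometer: for a decreasing sequence of finite-index normal subgroups $G_n$ of $G$, the inverse limit $X=\varprojlim(G/G_n,\pi_n)$ under the natural quotient maps, with $G$ acting by left multiplication coordinatewise. $C_n$ is the set of $x=(x_k)\in X$ with $x_n=G_n$, and $\mathcal P_n=\{f\cdot C_n:f\in F_n\}$ for a set $F_n$ of representatives of $G/G_n$, a clopen partition of $X$. Topological full group $[[G]]$: all homeomorphisms $s$ of $X$ such that every $x$ has a clopen neighborhood $U$ and some $g\in G$ with $s=g$ on $U$. For $\gamma\in[[G]]$, $f(\gamma,x)\in G$ is the unique element with $f(\gamma,x)\cdot x=\gamma\cdot x$; $[[G]]_n$ is the subgroup of $\gamma\in[[G]]$ with $f(\gamma,\cdot)$ constant on each atom of $\mathcal P_n$. *)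

theory Defs
  imports "HOL-Analysis.Analysis" "HOL-Algebra.Algebra"
begin

text \<open>Throughout, G is a group (HOL-Algebra structure) and Gs :: nat => 'a set is a
  sequence of subgroups; G/G_n is represented by the set of left cosets a G_n.\<close>

definition left_cosets :: "('a, 'b) monoid_scheme \<Rightarrow> 'a set \<Rightarrow> 'a set set" where
  "left_cosets G H = (\<lambda>a. l_coset G a H) ` carrier G"

text \<open>The inverse limit X of (G/G_n, pi_n): sequences of cosets x_n in G/G_n with
  pi_n(x_(n+1)) = x_n, i.e. x_(n+1) contained in x_n.\<close>

definition odometer_space :: "('a, 'b) monoid_scheme \<Rightarrow> (nat \<Rightarrow> 'a set) \<Rightarrow> (nat \<Rightarrow> 'a set) set" where
  "odometer_space G Gs =
     {x. (\<forall>n. x n \<in> left_cosets G (Gs n)) \<and> (\<forall>n. x (Suc n) \<subseteq> x n)}"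

definition odometer_topology :: "('a, 'b) monoid_scheme \<Rightarrow> (nat \<Rightarrow> 'a set) \<Rightarrow> (nat \<Rightarrow> 'a set) topology" where
  "odometer_topology G Gs =
     subtopology (product_topology (\<lambda>n. discrete_topology (left_cosets G (Gs n))) UNIV)
                 (odometer_space G Gs)"

definition odo_act :: "('a, 'b) monoid_scheme \<Rightarrow> 'a \<Rightarrow> (nat \<Rightarrow> 'a set) \<Rightarrow> (nat \<Rightarrow> 'a set)" where
  "odo_act G g x = (\<lambda>n. l_coset G g (x n))"

definition free_odometer :: "('a, 'b) monoid_scheme \<Rightarrow> (nat \<Rightarrow> 'a set) \<Rightarrow> bool" where
  "free_odometer G Gs \<longleftrightarrow>
     (\<forall>g \<in> carrier G. \<forall>x \<in> odometer_space G Gs. odo_act G g x = x \<longrightarrow> g = \<one>\<^bsub>G\<^esub>)"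

definition clopen_in :: "'x topology \<Rightarrow> 'x set \<Rightarrow> bool" where
  "clopen_in T U \<longleftrightarrow> openin T U \<and> closedin T U"

text \<open>To get a genuine
  group of functions, elements are normalised to be the identity outside X.\<close>

definition full_group_carrier :: "('a, 'b) monoid_scheme \<Rightarrow> (nat \<Rightarrow> 'a set) \<Rightarrow> ((nat \<Rightarrow> 'a set) \<Rightarrow> (nat \<Rightarrow> 'a set)) set" where
  "full_group_carrier G Gs =
     {s. homeomorphic_map (odometer_topology G Gs) (odometer_topology G Gs) s
       \<and> (\<forall>x. x \<notin> odometer_space G Gs \<longrightarrow> s x = x)
       \<and> (\<forall>x \<in> odometer_space G Gs. \<exists>U g. clopen_in (odometer_topology G Gs) U \<and> x \<in> U
             \<and> g \<in> carrier G \<and> (\<forall>y \<in> U. s y = odo_act G g y))}"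

definition full_group :: "('a, 'b) monoid_scheme \<Rightarrow> (nat \<Rightarrow> 'a set) \<Rightarrow> ((nat \<Rightarrow> 'a set) \<Rightarrow> (nat \<Rightarrow> 'a set)) monoid" where
  "full_group G Gs = \<lparr>carrier = full_group_carrier G Gs, mult = (\<lambda>s t. s \<circ> t), one = id\<rparr>"

definition cocycle :: "('a, 'b) monoid_scheme \<Rightarrow> ((nat \<Rightarrow> 'a set) \<Rightarrow> (nat \<Rightarrow> 'a set)) \<Rightarrow> (nat \<Rightarrow> 'a set) \<Rightarrow> 'a" where
  "cocycle G \<gamma> x = (THE g. g \<in> carrier G \<and> odo_act G g x = \<gamma> x)"

text \<open>The atom of P_n determined by the coset c in G/G_n is {x in X. x_n = c}
  (this is f . C_n when c = f G_n).\<close>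

definition atom :: "('a, 'b) monoid_scheme \<Rightarrow> (nat \<Rightarrow> 'a set) \<Rightarrow> nat \<Rightarrow> 'a set \<Rightarrow> (nat \<Rightarrow> 'a set) set" where
  "atom G Gs n c = {x \<in> odometer_space G Gs. x n = c}"

definition full_group_level :: "('a, 'b) monoid_scheme \<Rightarrow> (nat \<Rightarrow> 'a set) \<Rightarrow> nat \<Rightarrow> ((nat \<Rightarrow> 'a set) \<Rightarrow> (nat \<Rightarrow> 'a set)) set" where
  "full_group_level G Gs n =
     {\<gamma> \<in> full_group_carrier G Gs.
        \<forall>c \<in> left_cosets G (Gs n). \<forall>x \<in> atom G Gs n c. \<forall>y \<in> atom G Gs n c.
           cocycle G \<gamma> x = cocycle G \<gamma> y}"

text \<open>The semidirect product N^p \<rtimes> S_p, where S_p = permutations of {0..<p} acts on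
  N^p = ({0..<p} -> N) by permuting coordinates: (sigma . b)(i) = b(sigma^-1 i).\<close>

definition perm_semidirect :: "('a, 'b) monoid_scheme \<Rightarrow> nat \<Rightarrow> ((nat \<Rightarrow> 'a) \<times> (nat \<Rightarrow> nat)) monoid" where
  "perm_semidirect N p =
     \<lparr>carrier = ({0..<p} \<rightarrow>\<^sub>E carrier N) \<times> {\<sigma>. \<sigma> permutes {0..<p}},
      mult = (\<lambda>(a, \<sigma>) (b, \<tau>).
                (\<lambda>i \<in> {0..<p}. a i \<otimes>\<^bsub>N\<^esub> b (inv_into {0..<p} \<sigma> i), \<sigma> \<circ> \<tau>)),
      one = (\<lambda>i \<in> {0..<p}. \<one>\<^bsub>N\<^esub>, id)\<rparr>"

end

theory Submission
  imports Defs
begin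


locale odo =
  fixes G :: "('a, 'b) monoid_scheme" (structure) and Gs :: "nat \<Rightarrow> 'a set"
  assumes grp: "group G"
    and normal: "\<And>n. Gs n \<lhd> G"
    and fin_index: "\<And>n. finite (left_cosets G (Gs n))"
    and decr: "\<And>n. Gs (Suc n) \<subseteq> Gs n"
    and free: "free_odometer G Gs"
begin

sublocale group G by (rule grp)

abbreviation "XX \<equiv> odometer_space G Gs"
abbreviation "TT \<equiv> odometer_topology G Gs"
abbreviation "LC n \<equiv> left_cosets G (Gs n)"

lemma sub: "subgroup (Gs n) G"
  using normal normal_imp_subgroup by blast

lemma LC_iff: "c \<in> LC n \<longleftrightarrow> (\<exists>a\<in>carrier G. c = a <# Gs n)"
  by (auto simp: left_cosets_def)

lemma coset_self: "a \<in> carrier G \<Longrightarrow> a \<in> a <# Gs n"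
  unfolding l_coset_def using subgroup.one_closed[OF sub] by force

lemma LC_sub: "c \<in> LC n \<Longrightarrow> c \<subseteq> carrier G"
  using LC_iff l_coset_subset_G subgroup.subset[OF sub] by metis

lemma LC_ne: "c \<in> LC n \<Longrightarrow> c \<noteq> {}"
  using LC_iff coset_self by blast

lemma LC_eqI: "c \<in> LC n \<Longrightarrow> d \<in> LC n \<Longrightarrow> y \<in> c \<Longrightarrow> y \<in> d \<Longrightarrow> c = d"
  by (metis LC_iff l_repr_independence sub)

lemma coset_eq_imp: "x \<in> carrier G \<Longrightarrow> y \<in> carrier G \<Longrightarrow> x <# Gs n = y <# Gs n \<Longrightarrow> inv y \<otimes> x \<in> Gs n"
proof -
  assume xy: "x \<in> carrier G" "y \<in> carrier G" "x <# Gs n = y <# Gs n"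
  then have "x \<in> y <# Gs n" using coset_self by metis
  then obtain h where h: "h \<in> Gs n" "x = y \<otimes> h" unfolding l_coset_def by blast
  then have "h \<in> carrier G" using subgroup.subset[OF sub] by blast
  then show ?thesis using h xy by (simp add: m_assoc[symmetric])
qed

lemma coset_absorb: "x \<in> carrier G \<Longrightarrow> a \<in> Gs n \<Longrightarrow> (x \<otimes> a) <# Gs n = x <# Gs n"
proof -
  assume a: "x \<in> carrier G" "a \<in> Gs n"
  then have "x \<otimes> a \<in> x <# Gs n" unfolding l_coset_def by blast
  then show ?thesis using l_repr_independence[OF _ a(1) sub] by metis
qed

lemma X_chain: "x \<in> XX \<Longrightarrow> k \<le> m \<Longrightarrow> x m \<subseteq> x k"
proof -
  assume a: "x \<in> XX" "k \<le> m"
  then have "\<And>n. x (Suc n) \<le> x n" unfolding odometer_space_def by auto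
  then show ?thesis using lift_Suc_antimono_le[of x, OF _ a(2)] by blast
qed

lemma X_LC: "x \<in> XX \<Longrightarrow> x k \<in> LC k"
  unfolding odometer_space_def by auto

lemma X_det: "x \<in> XX \<Longrightarrow> y \<in> XX \<Longrightarrow> x m = y m \<Longrightarrow> k \<le> m \<Longrightarrow> x k = y k"
proof -
  assume a: "x \<in> XX" "y \<in> XX" "x m = y m" "k \<le> m"
  obtain z where "z \<in> x m" using LC_ne[OF X_LC[OF a(1)]] by blast
  then have "z \<in> x k" "z \<in> y k" using X_chain a by (auto, metis subsetD)
  then show ?thesis using LC_eqI X_LC a by blast
qed

lemma lcos_mono: "A \<subseteq> B \<Longrightarrow> g <# A \<subseteq> g <# B"
  unfolding l_coset_def by blast

lemma act_LC: "g \<in> carrier G \<Longrightarrow> c \<in> LC n \<Longrightarrow> g <# c \<in> LC n"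
  by (metis LC_iff lcos_m_assoc m_closed subgroup.subset[OF sub])

lemma act_X: "g \<in> carrier G \<Longrightarrow> x \<in> XX \<Longrightarrow> odo_act G g x \<in> XX"
  unfolding odometer_space_def odo_act_def using act_LC lcos_mono by (auto simp: left_cosets_def)

lemma act_one: "x \<in> XX \<Longrightarrow> odo_act G \<one> x = x"
  unfolding odo_act_def proof (rule ext)
  fix n assume "x \<in> XX" then show "\<one> <# x n = x n" using lcos_mult_one LC_sub X_LC by blast
qed

lemma act_mult: "g \<in> carrier G \<Longrightarrow> h \<in> carrier G \<Longrightarrow> x \<in> XX \<Longrightarrow>
   odo_act G g (odo_act G h x) = odo_act G (g \<otimes> h) x"
  unfolding odo_act_def proof (rule ext)
  fix n assume "g \<in> carrier G" "h \<in> carrier G" "x \<in> XX"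
  then show "g <# (h <# x n) = (g \<otimes> h) <# x n" using lcos_m_assoc LC_sub X_LC by blast
qed

lemma act_inj: "g \<in> carrier G \<Longrightarrow> h \<in> carrier G \<Longrightarrow> x \<in> XX \<Longrightarrow>
   odo_act G g x = odo_act G h x \<Longrightarrow> g = h"
proof -
  assume a: "g \<in> carrier G" "h \<in> carrier G" "x \<in> XX" "odo_act G g x = odo_act G h x"
  have "odo_act G (inv h \<otimes> g) x = odo_act G (inv h \<otimes> h) x"
    using a act_mult[symmetric] by (metis inv_closed)
  then have "odo_act G (inv h \<otimes> g) x = x" using a act_one by simp
  then have "inv h \<otimes> g = \<one>" using free a unfolding free_odometer_def by blast
  then show ?thesis using a by (metis inv_closed inv_comm inv_inv inv_equality)
qed

lemma cocycle_eq: "x \<in> XX \<Longrightarrow> g \<in> carrier G \<Longrightarrow> \<gamma> x = odo_act G g x \<Longrightarrow> cocycle G \<gamma> x = g"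
  unfolding cocycle_def by (rule the_equality) (auto dest: act_inj)


end

context odo begin
abbreviation "PP \<equiv> product_topology (\<lambda>n. discrete_topology (LC n)) UNIV"

lemma topspace_PP: "topspace PP = (\<Pi>\<^sub>E n\<in>UNIV. LC n)"
  by simp

lemma XX_sub_PP: "XX \<subseteq> topspace PP"
  unfolding topspace_PP using X_LC by (auto simp: PiE_iff)

lemma topspace_TT: "topspace TT = XX"
  unfolding odometer_topology_def using XX_sub_PP by auto

lemma proj_cont: "continuous_map TT (discrete_topology (LC m)) (\<lambda>x. x m)"
  unfolding odometer_topology_def
  by (rule continuous_map_from_subtopology) (rule continuous_map_product_projection, simp)

lemma atom_eq: "atom G Gs m c = {x \<in> topspace TT. x m \<in> {c} \<inter> LC m}"
  using X_LC by (auto simp: atom_def topspace_TT)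

lemma atom_open: "openin TT (atom G Gs m c)"
  unfolding atom_eq by (rule openin_continuous_map_preimage[OF proj_cont]) simp

lemma atom_closed: "closedin TT (atom G Gs m c)"
  unfolding atom_eq by (rule closedin_continuous_map_preimage[OF proj_cont]) simp

lemma atom_clopen: "clopen_in TT (atom G Gs m c)"
  using atom_open atom_closed clopen_in_def by blast

lemma atom_self: "x \<in> XX \<Longrightarrow> x \<in> atom G Gs m (x m)"
  by (simp add: atom_def)

lemma openin_TT_iff: "openin TT U \<longleftrightarrow> U \<subseteq> XX \<and> (\<forall>x\<in>U. \<exists>m. atom G Gs m (x m) \<subseteq> U)"
proof
  assume U: "openin TT U"
  have "U \<subseteq> XX" using openin_subset[OF U] topspace_TT by simp
  moreover have "\<exists>m. atom G Gs m (x m) \<subseteq> U" if x: "x \<in> U" for x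
  proof -
    obtain S where S: "openin PP S" "U = S \<inter> XX"
      using U unfolding odometer_topology_def openin_subtopology by blast
    then have "x \<in> S" using x by blast
    then obtain V where V: "finite {i \<in> UNIV. V i \<noteq> topspace (discrete_topology (LC i))}"
      "\<forall>i\<in>UNIV. openin (discrete_topology (LC i)) (V i)" "x \<in> Pi\<^sub>E UNIV V" "Pi\<^sub>E UNIV V \<subseteq> S"
      using S(1)[unfolded openin_product_topology_alt, rule_format, OF \<open>x \<in> S\<close>] by blast
    define F where "F = {i. V i \<noteq> LC i}"
    have finF: "finite F" using V(1) by (simp add: F_def)
    define m where "m = Max (insert 0 F)"
    have le: "i \<in> F \<Longrightarrow> i \<le> m" for i using finF by (simp add: m_def)
    have "y \<in> U" if y: "y \<in> atom G Gs m (x m)" for y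
    proof -
      have yX: "y \<in> XX" and ym: "y m = x m" using y by (auto simp: atom_def)
      have xX: "x \<in> XX" using x \<open>U \<subseteq> XX\<close> by blast
      have "y i \<in> V i" for i
      proof (cases "i \<in> F")
        case True
        then have "y i = x i" using X_det[OF yX xX ym le[OF True]] by simp
        then show ?thesis using V(3) by (simp add: PiE_iff)
      next
        case False
        then show ?thesis using X_LC[OF yX] by (simp add: F_def)
      qed
      then have "y \<in> Pi\<^sub>E UNIV V" by (simp add: PiE_iff)
      then show ?thesis using V(4) S(2) yX by blast
    qed
    then show ?thesis by blast
  qed
  ultimately show "U \<subseteq> XX \<and> (\<forall>x\<in>U. \<exists>m. atom G Gs m (x m) \<subseteq> U)" by blast
next
  assume R: "U \<subseteq> XX \<and> (\<forall>x\<in>U. \<exists>m. atom G Gs m (x m) \<subseteq> U)"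
  show "openin TT U"
  proof (subst openin_subopen, intro ballI)
    fix x assume "x \<in> U"
    then obtain m where "atom G Gs m (x m) \<subseteq> U" using R by blast
    moreover have "x \<in> atom G Gs m (x m)" using R \<open>x \<in> U\<close> atom_self by blast
    ultimately show "\<exists>T. openin TT T \<and> x \<in> T \<and> T \<subseteq> U" using atom_open by blast
  qed
qed

lemma cont_local:
  assumes "\<And>x. x \<in> XX \<Longrightarrow> f x \<in> XX"
    and "\<And>x. x \<in> XX \<Longrightarrow> \<exists>m. \<exists>g\<in>carrier G. \<forall>y\<in>atom G Gs m (x m). f y = odo_act G g y"
  shows "continuous_map TT TT f"
  unfolding continuous_map_def topspace_TT
proof (intro conjI allI impI)
  show "f \<in> XX \<rightarrow> XX" using assms(1) by blast
  fix U assume U: "openin TT U"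
  show "openin TT {x \<in> XX. f x \<in> U}"
    unfolding openin_TT_iff
  proof (intro conjI ballI)
    fix x assume x: "x \<in> {x \<in> XX. f x \<in> U}"
    then have xX: "x \<in> XX" and fxU: "f x \<in> U" by auto
    obtain m1 g where g: "g \<in> carrier G" "\<forall>y\<in>atom G Gs m1 (x m1). f y = odo_act G g y"
      using assms(2)[OF xX] by blast
    obtain m2 where m2: "atom G Gs m2 (f x m2) \<subseteq> U" using U fxU unfolding openin_TT_iff by blast
    have "y \<in> {x \<in> XX. f x \<in> U}" if y: "y \<in> atom G Gs (max m1 m2) (x (max m1 m2))" for y
    proof -
      have yX: "y \<in> XX" and ym: "y (max m1 m2) = x (max m1 m2)" using y by (auto simp: atom_def)
      have e1: "y m1 = x m1" and e2: "y m2 = x m2" using X_det[OF yX xX ym] by auto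
      have "f y = odo_act G g y" "f x = odo_act G g x" using g e1 xX yX by (auto simp: atom_def)
      then have "f y m2 = f x m2" using e2 by (simp add: odo_act_def)
      moreover have "f y \<in> XX" using assms(1) yX by blast
      ultimately have "f y \<in> atom G Gs m2 (f x m2)" by (simp add: atom_def)
      then show ?thesis using m2 yX by blast
    qed
    then show "\<exists>m. atom G Gs m (x m) \<subseteq> {x \<in> XX. f x \<in> U}" by blast
  qed auto
qed

lemma closed_XX: "closedin PP XX"
proof -
  have eq: "XX = (\<Inter>n. {x \<in> topspace PP. (\<lambda>x. (x n, x (Suc n))) x \<in> {(c, d). d \<subseteq> c} \<inter> (LC n \<times> LC (Suc n))})"
  proof (intro equalityI subsetI)
    fix x assume "x \<in> XX" then show "x \<in> (\<Inter>n. {x \<in> topspace PP. (\<lambda>x. (x n, x (Suc n))) x \<in> {(c, d). d \<subseteq> c} \<inter> (LC n \<times> LC (Suc n))})"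
      using XX_sub_PP X_LC unfolding odometer_space_def by blast
  next
    fix x assume "x \<in> (\<Inter>n. {x \<in> topspace PP. (\<lambda>x. (x n, x (Suc n))) x \<in> {(c, d). d \<subseteq> c} \<inter> (LC n \<times> LC (Suc n))})"
    then have "\<forall>n. x n \<in> LC n \<and> x (Suc n) \<subseteq> x n" by blast
    then show "x \<in> XX" unfolding odometer_space_def by blast
  qed
  have cont: "continuous_map PP (discrete_topology (LC n \<times> LC (Suc n))) (\<lambda>x. (x n, x (Suc n)))" for n
    unfolding prod_topology_discrete_topology
    by (intro continuous_map_pairedI continuous_map_product_projection) (rule UNIV_I)+
  show ?thesis unfolding eq
    apply (rule closedin_Inter)
     apply simp
    apply clarify
    apply (rule closedin_continuous_map_preimage[OF cont])
    apply simp
    done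
qed

lemma compact_TT: "compact_space TT"
proof -
  have "compact_space PP"
    unfolding compact_space_product_topology using fin_index
    by (simp add: compact_space_discrete_topology)
  then show ?thesis unfolding odometer_topology_def
    by (intro compact_space_subtopology closedin_compact_space closed_XX)
qed

end

context odo begin

lemma full_local:
  assumes "\<gamma> \<in> full_group_carrier G Gs" "x \<in> XX"
  shows "\<exists>m. \<exists>g\<in>carrier G. \<forall>y\<in>atom G Gs m (x m). \<gamma> y = odo_act G g y"
proof -
  obtain U g where U: "clopen_in TT U" "x \<in> U" "g \<in> carrier G" "\<forall>y\<in>U. \<gamma> y = odo_act G g y"
    using assms unfolding full_group_carrier_def by blast
  then obtain m where "atom G Gs m (x m) \<subseteq> U"
    unfolding clopen_in_def openin_TT_iff by blast
  then show ?thesis using U by blast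
qed

lemma full_maps: "\<gamma> \<in> full_group_carrier G Gs \<Longrightarrow> x \<in> XX \<Longrightarrow> \<gamma> x \<in> XX"
  unfolding full_group_carrier_def
  by (metis (no_types, lifting) mem_Collect_eq homeomorphic_imp_surjective_map image_eqI topspace_TT)

lemma cocycle_spec:
  assumes "\<gamma> \<in> full_group_carrier G Gs" "x \<in> XX"
  shows "cocycle G \<gamma> x \<in> carrier G \<and> \<gamma> x = odo_act G (cocycle G \<gamma> x) x"
proof -
  obtain m g where g: "g \<in> carrier G" "\<forall>y\<in>atom G Gs m (x m). \<gamma> y = odo_act G g y"
    using full_local[OF assms] by blast
  then have "\<gamma> x = odo_act G g x" using assms(2) atom_self by blast
  then show ?thesis using cocycle_eq[OF assms(2) g(1)] g(1) by simp
qed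

lemma level_mono: "full_group_level G Gs n \<subseteq> full_group_level G Gs (Suc n)"
proof
  fix \<gamma> assume g: "\<gamma> \<in> full_group_level G Gs n"
  show "\<gamma> \<in> full_group_level G Gs (Suc n)"
    unfolding full_group_level_def
  proof (intro CollectI conjI ballI)
    show "\<gamma> \<in> full_group_carrier G Gs" using g by (simp add: full_group_level_def)
    fix c x y assume c: "c \<in> LC (Suc n)" and x: "x \<in> atom G Gs (Suc n) c" and y: "y \<in> atom G Gs (Suc n) c"
    have xX: "x \<in> XX" and yX: "y \<in> XX" using x y by (auto simp: atom_def)
    have "x (Suc n) = y (Suc n)" using x y by (simp add: atom_def)
    then have e: "x n = y n" using X_det[OF xX yX] by simp
    have "x \<in> atom G Gs n (x n)" "y \<in> atom G Gs n (x n)" using xX yX e by (auto simp: atom_def)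
    then show "cocycle G \<gamma> x = cocycle G \<gamma> y"
      using g X_LC[OF xX] unfolding full_group_level_def by blast
  qed
qed

lemma full_union: "full_group_carrier G Gs = (\<Union>n. full_group_level G Gs n)"
proof (intro equalityI subsetI)
  fix \<gamma> assume \<gamma>: "\<gamma> \<in> full_group_carrier G Gs"
  define \<U> where "\<U> = {A. \<exists>m c. A = atom G Gs m c \<and> (\<exists>g\<in>carrier G. \<forall>y\<in>A. \<gamma> y = odo_act G g y)}"
  have "\<forall>U\<in>\<U>. openin TT U" unfolding \<U>_def using atom_open by blast
  moreover have "topspace TT \<subseteq> \<Union>\<U>"
  proof
    fix x assume "x \<in> topspace TT"
    then have xX: "x \<in> XX" using topspace_TT by simp
    obtain m g where "g \<in> carrier G" "\<forall>y\<in>atom G Gs m (x m). \<gamma> y = odo_act G g y"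
      using full_local[OF \<gamma> xX] by blast
    then have "atom G Gs m (x m) \<in> \<U>" unfolding \<U>_def by blast
    then show "x \<in> \<Union>\<U>" using atom_self[OF xX] by blast
  qed
  ultimately obtain \<F> where F: "finite \<F>" "\<F> \<subseteq> \<U>" "topspace TT \<subseteq> \<Union>\<F>"
    using compact_TT unfolding compact_space_alt by meson
  have "\<forall>A\<in>\<F>. \<exists>m. \<exists>c. A = atom G Gs m c \<and> (\<exists>g\<in>carrier G. \<forall>y\<in>A. \<gamma> y = odo_act G g y)"
    using F(2) unfolding \<U>_def by blast
  then obtain f where f: "\<forall>A\<in>\<F>. \<exists>c. A = atom G Gs (f A) c \<and> (\<exists>g\<in>carrier G. \<forall>y\<in>A. \<gamma> y = odo_act G g y)"
    by metis
  define N where "N = Max (insert 0 (f ` \<F>))"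
  have fN: "A \<in> \<F> \<Longrightarrow> f A \<le> N" for A using F(1) by (simp add: N_def)
  have "\<gamma> \<in> full_group_level G Gs N"
    unfolding full_group_level_def
  proof (intro CollectI conjI ballI)
    show "\<gamma> \<in> full_group_carrier G Gs" by (rule \<gamma>)
    fix c x y assume c: "c \<in> LC N" and x: "x \<in> atom G Gs N c" and y: "y \<in> atom G Gs N c"
    have xX: "x \<in> XX" and yX: "y \<in> XX" and xy: "x N = y N" using x y by (auto simp: atom_def)
    obtain A where A: "A \<in> \<F>" "x \<in> A" using F(3) xX topspace_TT by blast
    obtain c' g where cg: "A = atom G Gs (f A) c'" "g \<in> carrier G" "\<forall>y\<in>A. \<gamma> y = odo_act G g y"
      using f A(1) by blast
    have "y (f A) = x (f A)" using X_det[OF yX xX xy[symmetric] fN[OF A(1)]] .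
    moreover have "x \<in> atom G Gs (f A) c'" using A(2) cg(1) by metis
    ultimately have "y \<in> atom G Gs (f A) c'" using yX by (simp add: atom_def)
    then have yA: "y \<in> A" using cg(1) by metis
    have "cocycle G \<gamma> x = g" using cocycle_eq[OF xX cg(2)] cg(3) A(2) by blast
    moreover have "cocycle G \<gamma> y = g" using cocycle_eq[OF yX cg(2)] cg(3) yA by blast
    ultimately show "cocycle G \<gamma> x = cocycle G \<gamma> y" by simp
  qed
  then show "\<gamma> \<in> (\<Union>n. full_group_level G Gs n)" by blast
qed (auto simp: full_group_level_def)

end


locale lvl = odo +
  fixes n :: nat and e :: "nat \<Rightarrow> 'a set"
  assumes e_bij: "bij_betw e {0..<card (left_cosets G (Gs n))} (left_cosets G (Gs n))"
begin

abbreviation "p \<equiv> card (LC n)"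
abbreviation finv :: "(nat \<Rightarrow> nat) \<Rightarrow> nat \<Rightarrow> nat" where "finv \<sigma> \<equiv> Hilbert_Choice.inv \<sigma>"
abbreviation "S \<equiv> {0..<p}"

definition r :: "nat \<Rightarrow> 'a" where "r i = (SOME a. a \<in> carrier G \<and> e i = a <# Gs n)"

lemma e_LC: "i < p \<Longrightarrow> e i \<in> LC n"
  using bij_betwE[OF e_bij] by simp

lemma e_inj: "i < p \<Longrightarrow> j < p \<Longrightarrow> e i = e j \<Longrightarrow> i = j"
  using e_bij unfolding bij_betw_def inj_on_def by auto

lemma r_spec: "i < p \<Longrightarrow> r i \<in> carrier G \<and> e i = r i <# Gs n"
proof -
  assume "i < p"
  then have "\<exists>a. a \<in> carrier G \<and> e i = a <# Gs n" using e_LC LC_iff by blast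
  then show ?thesis unfolding r_def by (rule someI_ex)
qed

definition pt :: "nat \<Rightarrow> nat \<Rightarrow> 'a set" where "pt i = (\<lambda>k. r i <# Gs k)"

lemma pt_atom: "i < p \<Longrightarrow> pt i \<in> atom G Gs n (e i)"
proof -
  assume i: "i < p"
  have "pt i \<in> XX" unfolding odometer_space_def pt_def
  proof (intro CollectI conjI allI)
    fix k show "r i <# Gs k \<in> LC k" using r_spec[OF i] by (simp add: left_cosets_def)
    show "r i <# Gs (Suc k) \<subseteq> r i <# Gs k" using lcos_mono[OF decr] .
  qed
  then show ?thesis using r_spec[OF i] by (simp add: atom_def pt_def)
qed

definition ind :: "(nat \<Rightarrow> 'a set) \<Rightarrow> nat" where "ind x = inv_into S e (x n)"

lemma ind: "x \<in> XX \<Longrightarrow> ind x < p \<and> e (ind x) = x n"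
proof -
  assume "x \<in> XX"
  then have "x n \<in> e ` S" using X_LC[of x n] bij_betw_imp_surj_on[OF e_bij] by simp
  then show ?thesis unfolding ind_def using inv_into_into[of "x n" e S] f_inv_into_f[of "x n" e S] by simp
qed

lemma ind_atom: "i < p \<Longrightarrow> x \<in> atom G Gs n (e i) \<Longrightarrow> ind x = i"
proof -
  assume a: "i < p" "x \<in> atom G Gs n (e i)"
  then have "x \<in> XX" "x n = e i" by (auto simp: atom_def)
  then show ?thesis using ind e_inj a(1) by metis
qed

lemma atom_ind: "x \<in> XX \<Longrightarrow> x \<in> atom G Gs n (e (ind x))"
  using ind by (simp add: atom_def)

definition mk :: "(nat \<Rightarrow> 'a) \<Rightarrow> (nat \<Rightarrow> 'a set) \<Rightarrow> (nat \<Rightarrow> 'a set)" where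
  "mk g x = (if x \<in> XX then odo_act G (g (ind x)) x else x)"

definition good :: "(nat \<Rightarrow> 'a) \<Rightarrow> (nat \<Rightarrow> nat) \<Rightarrow> bool" where
  "good g \<sigma> \<longleftrightarrow> \<sigma> permutes S \<and> (\<forall>i<p. g i \<in> carrier G \<and> g i <# e i = e (\<sigma> i))"

lemma good_lt: "good g \<sigma> \<Longrightarrow> i < p \<Longrightarrow> \<sigma> i < p"
  unfolding good_def using permutes_in_image by fastforce

lemma mk_cong: "(\<And>i. i < p \<Longrightarrow> g i = h i) \<Longrightarrow> mk g = mk h"
  unfolding mk_def using ind by (intro ext) auto

lemma mk_atom:
  assumes "good g \<sigma>" "i < p" "x \<in> atom G Gs n (e i)"
  shows "mk g x = odo_act G (g i) x \<and> mk g x \<in> atom G Gs n (e (\<sigma> i))"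
proof -
  have xX: "x \<in> XX" and xn: "x n = e i" using assms(3) by (auto simp: atom_def)
  have gi: "g i \<in> carrier G" "g i <# e i = e (\<sigma> i)" using assms(1,2) by (auto simp: good_def)
  have "mk g x = odo_act G (g i) x" using ind_atom[OF assms(2,3)] xX by (simp add: mk_def)
  moreover have "odo_act G (g i) x \<in> XX" using act_X[OF gi(1) xX] .
  moreover have "odo_act G (g i) x n = e (\<sigma> i)" using xn gi by (simp add: odo_act_def)
  ultimately show ?thesis by (simp add: atom_def)
qed

lemma mk_XX: "good g \<sigma> \<Longrightarrow> x \<in> XX \<Longrightarrow> mk g x \<in> XX"
  using mk_atom[of g \<sigma> "ind x" x] ind atom_ind by (auto simp: atom_def)

lemma mk_image:
  assumes "good g \<sigma>" "i < p"
  shows "mk g ` atom G Gs n (e i) = atom G Gs n (e (\<sigma> i))"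
proof
  show "mk g ` atom G Gs n (e i) \<subseteq> atom G Gs n (e (\<sigma> i))" using mk_atom[OF assms] by blast
  show "atom G Gs n (e (\<sigma> i)) \<subseteq> mk g ` atom G Gs n (e i)"
  proof
    fix y assume y: "y \<in> atom G Gs n (e (\<sigma> i))"
    have gi: "g i \<in> carrier G" "g i <# e i = e (\<sigma> i)" using assms by (auto simp: good_def)
    have yX: "y \<in> XX" and yn: "y n = e (\<sigma> i)" using y by (auto simp: atom_def)
    define x where "x = odo_act G (inv (g i)) y"
    have xX: "x \<in> XX" unfolding x_def using act_X gi yX by simp
    have "x n = inv (g i) <# (g i <# e i)" using yn gi by (simp add: x_def odo_act_def)
    also have "\<dots> = (inv (g i) \<otimes> g i) <# e i"
      by (rule lcos_m_assoc[OF LC_sub[OF e_LC[OF assms(2)]]]) (use gi in auto)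
    also have "\<dots> = e i" using gi(1) lcos_mult_one[OF LC_sub[OF e_LC[OF assms(2)]]] by simp
    finally have xa: "x \<in> atom G Gs n (e i)" using xX by (simp add: atom_def)
    have "mk g x = odo_act G (g i) x" using mk_atom[OF assms xa] by simp
    also have "\<dots> = y" unfolding x_def using gi yX by (simp add: act_mult act_one)
    finally show "y \<in> mk g ` atom G Gs n (e i)" using xa by (metis image_eqI)
  qed
qed

lemma good_comp:
  assumes g: "good g \<sigma>" and h: "good h \<tau>"
  shows "good (\<lambda>i. g (\<tau> i) \<otimes> h i) (\<sigma> \<circ> \<tau>) \<and> mk g \<circ> mk h = mk (\<lambda>i. g (\<tau> i) \<otimes> h i)"
proof
  show gc: "good (\<lambda>i. g (\<tau> i) \<otimes> h i) (\<sigma> \<circ> \<tau>)"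
    unfolding good_def
  proof (intro conjI allI impI)
    show "\<sigma> \<circ> \<tau> permutes S" using g h permutes_compose by (auto simp: good_def)
    fix i assume i: "i < p"
    have ti: "\<tau> i < p" using good_lt[OF h i] .
    have gh: "g (\<tau> i) \<in> carrier G" "h i \<in> carrier G" "h i <# e i = e (\<tau> i)" "g (\<tau> i) <# e (\<tau> i) = e (\<sigma> (\<tau> i))"
      using g h i ti by (auto simp: good_def)
    show "g (\<tau> i) \<otimes> h i \<in> carrier G" using gh by simp
    show "(g (\<tau> i) \<otimes> h i) <# e i = e ((\<sigma> \<circ> \<tau>) i)"
      using gh lcos_m_assoc[OF LC_sub[OF e_LC[OF i]], of "g (\<tau> i)" "h i"] by simp
  qed
  show "mk g \<circ> mk h = mk (\<lambda>i. g (\<tau> i) \<otimes> h i)"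
  proof
    fix x show "(mk g \<circ> mk h) x = mk (\<lambda>i. g (\<tau> i) \<otimes> h i) x"
    proof (cases "x \<in> XX")
      case False then show ?thesis by (simp add: mk_def)
    next
      case True
      define i where "i = ind x"
      have i: "i < p" "x \<in> atom G Gs n (e i)" using ind atom_ind True i_def by auto
      have 1: "mk h x = odo_act G (h i) x" "mk h x \<in> atom G Gs n (e (\<tau> i))" using mk_atom[OF h i] by auto
      have 2: "mk g (mk h x) = odo_act G (g (\<tau> i)) (mk h x)" using mk_atom[OF g good_lt[OF h i(1)] 1(2)] by simp
      have 3: "mk (\<lambda>i. g (\<tau> i) \<otimes> h i) x = odo_act G (g (\<tau> i) \<otimes> h i) x" using mk_atom[OF gc i] by simp
      have "g (\<tau> i) \<in> carrier G" "h i \<in> carrier G" using g h i good_lt[OF h i(1)] by (auto simp: good_def)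
      then show ?thesis using 1 2 3 act_mult True by simp
    qed
  qed
qed

lemma mk_one: "mk (\<lambda>i. \<one>) = id"
  unfolding mk_def using act_one by (intro ext) auto

lemma good_one: "good (\<lambda>i. \<one>) id"
proof -
  have "\<one> <# e i = e i" if "i<p" for i using lcos_mult_one[OF LC_sub[OF e_LC[OF that]]] .
  then show ?thesis unfolding good_def by (simp add: permutes_id)
qed

definition ginv :: "(nat \<Rightarrow> 'a) \<Rightarrow> (nat \<Rightarrow> nat) \<Rightarrow> nat \<Rightarrow> 'a" where
  "ginv g \<sigma> i = inv (g (finv \<sigma> i))"

lemma good_inv:
  assumes g: "good g \<sigma>"
  shows "good (ginv g \<sigma>) (finv \<sigma>) \<and> mk (ginv g \<sigma>) \<circ> mk g = id \<and> mk g \<circ> mk (ginv g \<sigma>) = id"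
proof -
  have perm: "\<sigma> permutes S" using g by (simp add: good_def)
  have gi: "good (ginv g \<sigma>) (finv \<sigma>)"
    unfolding good_def
  proof (intro conjI allI impI)
    show "finv \<sigma> permutes S" using permutes_inv[OF perm] .
    fix i assume i: "i < p"
    define k where "k = finv \<sigma> i"
    have "k \<in> S" unfolding k_def using permutes_in_image[OF permutes_inv[OF perm], of i] i by simp
    then have k: "k < p" "\<sigma> k = i" using permutes_inverses(1)[OF perm, of i] by (auto simp: k_def)
    have gk: "g k \<in> carrier G" "g k <# e k = e i" using g k by (auto simp: good_def)
    show "ginv g \<sigma> i \<in> carrier G" using gk by (simp add: ginv_def k_def[symmetric])
    have "inv (g k) <# (g k <# e k) = e k"
      using gk lcos_m_assoc[OF LC_sub[OF e_LC[OF k(1)]], of "inv (g k)" "g k"] lcos_mult_one[OF LC_sub[OF e_LC[OF k(1)]]]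
      by simp
    then show "ginv g \<sigma> i <# e i = e (finv \<sigma> i)" using gk by (simp add: ginv_def k_def[symmetric])
  qed
  have c1: "mk (ginv g \<sigma>) \<circ> mk g = id"
  proof -
    have "mk (ginv g \<sigma>) \<circ> mk g = mk (\<lambda>i. ginv g \<sigma> (\<sigma> i) \<otimes> g i)" using good_comp[OF gi g] by simp
    also have "\<dots> = mk (\<lambda>i. \<one>)"
    proof (rule mk_cong)
      fix i assume i: "i < p"
      have "g i \<in> carrier G" using g i by (simp add: good_def)
      then show "ginv g \<sigma> (\<sigma> i) \<otimes> g i = \<one>"
        unfolding ginv_def permutes_inverses(2)[OF perm] by simp
    qed
    finally show ?thesis using mk_one by simp
  qed
  have c2: "mk g \<circ> mk (ginv g \<sigma>) = id"
  proof -
    have "mk g \<circ> mk (ginv g \<sigma>) = mk (\<lambda>i. g (finv \<sigma> i) \<otimes> ginv g \<sigma> i)" using good_comp[OF g gi] by simp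
    also have "\<dots> = mk (\<lambda>i. \<one>)"
    proof (rule mk_cong)
      fix i assume i: "i < p"
      then have "finv \<sigma> i \<in> S" using permutes_in_image[OF permutes_inv[OF perm], of i] by simp
      then have "g (finv \<sigma> i) \<in> carrier G" using g by (simp add: good_def)
      then show "g (finv \<sigma> i) \<otimes> ginv g \<sigma> i = \<one>" by (simp add: ginv_def)
    qed
    finally show ?thesis using mk_one by simp
  qed
  show ?thesis using gi c1 c2 by simp
qed

end

context lvl begin

lemma mk_local:
  assumes "good g \<sigma>" "x \<in> XX"
  shows "g (ind x) \<in> carrier G \<and> (\<forall>y\<in>atom G Gs n (x n). mk g y = odo_act G (g (ind x)) y)"
proof -
  have i: "ind x < p" "e (ind x) = x n" using ind[OF assms(2)] by auto
  have "g (ind x) \<in> carrier G" using assms(1) i by (simp add: good_def)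
  moreover have "\<forall>y\<in>atom G Gs n (x n). mk g y = odo_act G (g (ind x)) y"
    using mk_atom[OF assms(1) i(1)] i(2) by metis
  ultimately show ?thesis by blast
qed

lemma mk_cont: "good g \<sigma> \<Longrightarrow> continuous_map TT TT (mk g)"
proof (rule cont_local)
  fix x assume "good g \<sigma>" "x \<in> XX"
  then show "mk g x \<in> XX" by (rule mk_XX)
  show "\<exists>m. \<exists>h\<in>carrier G. \<forall>y\<in>atom G Gs m (x m). mk g y = odo_act G h y"
    using mk_local[OF \<open>good g \<sigma>\<close> \<open>x \<in> XX\<close>] by blast
qed

lemma mk_carrier:
  assumes g: "good g \<sigma>"
  shows "mk g \<in> full_group_carrier G Gs"
proof -
  have gi: "good (ginv g \<sigma>) (finv \<sigma>)" "mk (ginv g \<sigma>) \<circ> mk g = id" "mk g \<circ> mk (ginv g \<sigma>) = id"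
    using good_inv[OF g] by auto
  have "homeomorphic_maps TT TT (mk g) (mk (ginv g \<sigma>))"
    unfolding homeomorphic_maps_def
    using mk_cont[OF g] mk_cont[OF gi(1)] pointfree_idE[OF gi(2)] pointfree_idE[OF gi(3)] by blast
  then have "homeomorphic_map TT TT (mk g)" using homeomorphic_map_maps by blast
  moreover have "\<forall>x. x \<notin> XX \<longrightarrow> mk g x = x" by (simp add: mk_def)
  moreover have "\<forall>x\<in>XX. \<exists>U h. clopen_in TT U \<and> x \<in> U \<and> h \<in> carrier G \<and> (\<forall>y\<in>U. mk g y = odo_act G h y)"
  proof
    fix x assume x: "x \<in> XX"
    show "\<exists>U h. clopen_in TT U \<and> x \<in> U \<and> h \<in> carrier G \<and> (\<forall>y\<in>U. mk g y = odo_act G h y)"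
      using mk_local[OF g x] atom_clopen atom_self[OF x] by blast
  qed
  ultimately show ?thesis unfolding full_group_carrier_def by blast
qed

lemma mk_level:
  assumes g: "good g \<sigma>"
  shows "mk g \<in> full_group_level G Gs n"
  unfolding full_group_level_def
proof (intro CollectI conjI ballI)
  show "mk g \<in> full_group_carrier G Gs" using mk_carrier[OF g] .
  fix c x y assume c: "c \<in> LC n" and x: "x \<in> atom G Gs n c" and y: "y \<in> atom G Gs n c"
  have xX: "x \<in> XX" and yX: "y \<in> XX" and xy: "x n = c" "y n = c" using x y by (auto simp: atom_def)
  have l: "g (ind x) \<in> carrier G" "\<forall>z\<in>atom G Gs n (x n). mk g z = odo_act G (g (ind x)) z"
    using mk_local[OF g xX] by auto
  have "cocycle G (mk g) x = g (ind x)" using cocycle_eq[OF xX l(1)] l(2) x xy by simp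
  moreover have "cocycle G (mk g) y = g (ind x)" using cocycle_eq[OF yX l(1)] l(2) y xy by simp
  ultimately show "cocycle G (mk g) x = cocycle G (mk g) y" by simp
qed

definition gg :: "((nat \<Rightarrow> 'a set) \<Rightarrow> (nat \<Rightarrow> 'a set)) \<Rightarrow> nat \<Rightarrow> 'a" where
  "gg \<gamma> i = cocycle G \<gamma> (pt i)"

definition sg :: "((nat \<Rightarrow> 'a set) \<Rightarrow> (nat \<Rightarrow> 'a set)) \<Rightarrow> nat \<Rightarrow> nat" where
  "sg \<gamma> i = (if i < p then ind (\<gamma> (pt i)) else i)"

lemma mk_data:
  assumes k: "good k \<rho>"
  shows "(\<forall>i<p. gg (mk k) i = k i) \<and> sg (mk k) = \<rho>"
proof
  show "\<forall>i<p. gg (mk k) i = k i"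
  proof (intro allI impI)
    fix i assume i: "i < p"
    have "k i \<in> carrier G" using k i by (simp add: good_def)
    then show "gg (mk k) i = k i" unfolding gg_def
      using cocycle_eq mk_atom[OF k i pt_atom[OF i]] pt_atom[OF i] by (simp add: atom_def)
  qed
  show "sg (mk k) = \<rho>"
  proof
    fix i show "sg (mk k) i = \<rho> i"
    proof (cases "i < p")
      case True
      have "mk k (pt i) \<in> atom G Gs n (e (\<rho> i))" using mk_atom[OF k True pt_atom[OF True]] by blast
      then have "ind (mk k (pt i)) = \<rho> i" using ind_atom good_lt[OF k True] by blast
      then show ?thesis unfolding sg_def using True by simp
    next
      case False
      have "\<rho> permutes S" using k by (simp add: good_def)
      then have "\<rho> i = i" using permutes_not_in False by fastforce
      then show ?thesis using False by (simp add: sg_def)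
    qed
  qed
qed

lemma level_rep:
  assumes \<gamma>: "\<gamma> \<in> full_group_level G Gs n"
  shows "good (gg \<gamma>) (sg \<gamma>) \<and> \<gamma> = mk (gg \<gamma>)"
proof -
  have \<gamma>c: "\<gamma> \<in> full_group_carrier G Gs" using \<gamma> by (simp add: full_group_level_def)
  have act: "\<gamma> x = odo_act G (gg \<gamma> i) x" if i: "i < p" and x: "x \<in> atom G Gs n (e i)" for i x
  proof -
    have xX: "x \<in> XX" using x by (simp add: atom_def)
    have "cocycle G \<gamma> x = cocycle G \<gamma> (pt i)"
      using \<gamma> e_LC[OF i] x pt_atom[OF i] unfolding full_group_level_def by blast
    then show ?thesis using cocycle_spec[OF \<gamma>c xX] by (simp add: gg_def)
  qed
  have ggc: "gg \<gamma> i \<in> carrier G" if "i < p" for i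
    using cocycle_spec[OF \<gamma>c] pt_atom[OF that] by (simp add: gg_def atom_def)
  have eq: "\<gamma> = mk (gg \<gamma>)"
  proof
    fix x show "\<gamma> x = mk (gg \<gamma>) x"
    proof (cases "x \<in> XX")
      case False then show ?thesis using \<gamma>c by (simp add: mk_def full_group_carrier_def)
    next
      case True
      then show ?thesis using act[OF _ atom_ind[OF True]] ind[OF True] by (simp add: mk_def)
    qed
  qed
  have sgv: "i < p \<Longrightarrow> sg \<gamma> i < p \<and> gg \<gamma> i <# e i = e (sg \<gamma> i)" for i
  proof -
    assume i: "i < p"
    have "\<gamma> (pt i) = odo_act G (gg \<gamma> i) (pt i)" using act[OF i pt_atom[OF i]] .
    moreover have "\<gamma> (pt i) \<in> XX" using full_maps[OF \<gamma>c] pt_atom[OF i] by (simp add: atom_def)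
    ultimately show ?thesis using ind[of "\<gamma> (pt i)"] pt_atom[OF i] i
      by (simp add: sg_def odo_act_def atom_def)
  qed
  have img: "sg \<gamma> ` S = S"
  proof
    show "sg \<gamma> ` S \<subseteq> S" using sgv by auto
    show "S \<subseteq> sg \<gamma> ` S"
    proof
      fix j assume "j \<in> S"
      then have j: "j < p" by simp
      have "pt j \<in> XX" using pt_atom[OF j] by (simp add: atom_def)
      then have "pt j \<in> \<gamma> ` XX"
        using \<gamma>c homeomorphic_imp_surjective_map topspace_TT unfolding full_group_carrier_def by fastforce
      then obtain x where x: "x \<in> XX" "pt j = \<gamma> x" by blast
      define i where "i = ind x"
      have i: "i < p" "x \<in> atom G Gs n (e i)" using ind[OF x(1)] atom_ind[OF x(1)] by (auto simp: i_def)
      have "\<gamma> x n = gg \<gamma> i <# e i" using act[OF i] i(2) by (simp add: odo_act_def atom_def)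
      also have "\<dots> = e (sg \<gamma> i)" using sgv[OF i(1)] by simp
      finally have "e j = e (sg \<gamma> i)" using x(2) pt_atom[OF j] by (simp add: atom_def)
      then have "j = sg \<gamma> i" using e_inj j sgv[OF i(1)] by blast
      then show "j \<in> sg \<gamma> ` S" using i(1) by simp
    qed
  qed
  have "bij_betw (sg \<gamma>) S S"
    unfolding bij_betw_def using img eq_card_imp_inj_on[of S "sg \<gamma>"] by simp
  then have "sg \<gamma> permutes S" by (rule bij_imp_permutes) (simp add: sg_def)
  then have "good (gg \<gamma>) (sg \<gamma>)" unfolding good_def using ggc sgv by blast
  then show ?thesis using eq by blast
qed

end

context lvl begin

abbreviation "FGL \<equiv> (full_group G Gs)\<lparr>carrier := full_group_level G Gs n\<rparr>"
abbreviation "SD \<equiv> perm_semidirect (G\<lparr>carrier := Gs n\<rparr>) p"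

definition Phi where
  "Phi \<gamma> = ((\<lambda>j\<in>S. inv (r j) \<otimes> (gg \<gamma> (finv (sg \<gamma>) j) \<otimes> r (finv (sg \<gamma>) j))), sg \<gamma>)"

lemma perm_facts:
  assumes "\<sigma> permutes S" "j < p"
  shows "finv \<sigma> j < p \<and> \<sigma> (finv \<sigma> j) = j \<and> inv_into S \<sigma> j = finv \<sigma> j"
proof -
  have a: "finv \<sigma> j \<in> S" using permutes_in_image[OF permutes_inv[OF assms(1)], of j] assms(2) by simp
  have b: "\<sigma> (finv \<sigma> j) = j" using permutes_inverses(1)[OF assms(1)] .
  have "inj_on \<sigma> S" using permutes_inj[OF assms(1)] by (simp add: inj_on_def inj_def)
  then have "inv_into S \<sigma> j = finv \<sigma> j" using inv_into_f_eq a b by metis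
  then show ?thesis using a b by simp
qed

lemma cancel1: "a \<in> carrier G \<Longrightarrow> x \<in> carrier G \<Longrightarrow> a \<otimes> (inv a \<otimes> x) = x"
  by (simp add: m_assoc[symmetric])

lemma cancel2: "a \<in> carrier G \<Longrightarrow> x \<in> carrier G \<Longrightarrow> inv a \<otimes> (a \<otimes> x) = x"
  by (simp add: m_assoc[symmetric])

lemma Phi_mk:
  assumes k: "good k \<rho>"
  shows "Phi (mk k) = ((\<lambda>j\<in>S. inv (r j) \<otimes> (k (finv \<rho> j) \<otimes> r (finv \<rho> j))), \<rho>)"
proof -
  have d: "\<forall>i<p. gg (mk k) i = k i" "sg (mk k) = \<rho>" using mk_data[OF k] by auto
  have perm: "\<rho> permutes S" using k by (simp add: good_def)
  have "(\<lambda>j\<in>S. inv (r j) \<otimes> (gg (mk k) (finv \<rho> j) \<otimes> r (finv \<rho> j)))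
      = (\<lambda>j\<in>S. inv (r j) \<otimes> (k (finv \<rho> j) \<otimes> r (finv \<rho> j)))"
  proof (rule restrict_ext)
    fix j assume "j \<in> S"
    then have "finv \<rho> j < p" using perm_facts[OF perm] by simp
    then show "inv (r j) \<otimes> (gg (mk k) (finv \<rho> j) \<otimes> r (finv \<rho> j)) = inv (r j) \<otimes> (k (finv \<rho> j) \<otimes> r (finv \<rho> j))"
      using d(1) by simp
  qed
  then show ?thesis unfolding Phi_def d(2) by simp
qed

lemma Phi_carrier:
  assumes k: "good k \<rho>"
  shows "Phi (mk k) \<in> carrier SD"
proof -
  have perm: "\<rho> permutes S" using k by (simp add: good_def)
  have "inv (r j) \<otimes> (k (finv \<rho> j) \<otimes> r (finv \<rho> j)) \<in> Gs n" if j: "j \<in> S" for j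
  proof -
    define l where "l = finv \<rho> j"
    have l: "l < p" "\<rho> l = j" using perm_facts[OF perm] j by (auto simp: l_def)
    have kl: "k l \<in> carrier G" "k l <# e l = e j" using k l by (auto simp: good_def)
    have rl: "r l \<in> carrier G" "e l = r l <# Gs n" using r_spec[OF l(1)] by auto
    have rj: "r j \<in> carrier G" "e j = r j <# Gs n" using r_spec j by auto
    have "(k l \<otimes> r l) <# Gs n = k l <# (r l <# Gs n)"
      using lcos_m_assoc[OF subgroup.subset[OF sub] kl(1) rl(1)] by simp
    also have "\<dots> = r j <# Gs n" using kl rl rj by simp
    finally show ?thesis using coset_eq_imp[of "k l \<otimes> r l" "r j" n] kl rl rj by (simp add: l_def)
  qed
  then show ?thesis unfolding Phi_mk[OF k] perm_semidirect_def using perm by simp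
qed

lemma Phi_hom:
  assumes g: "good g \<sigma>" and h: "good h \<tau>"
  shows "Phi (mk g \<circ> mk h) = Phi (mk g) \<otimes>\<^bsub>SD\<^esub> Phi (mk h)"
proof -
  have c: "good (\<lambda>i. g (\<tau> i) \<otimes> h i) (\<sigma> \<circ> \<tau>)" "mk g \<circ> mk h = mk (\<lambda>i. g (\<tau> i) \<otimes> h i)"
    using good_comp[OF g h] by auto
  have ps: "\<sigma> permutes S" and pt: "\<tau> permutes S" using g h by (auto simp: good_def)
  have fo: "finv (\<sigma> \<circ> \<tau>) = finv \<tau> \<circ> finv \<sigma>"
    using o_inv_distrib[OF permutes_bij[OF ps] permutes_bij[OF pt]] .
  have "(\<lambda>j\<in>S. inv (r j) \<otimes> ((g (\<tau> (finv (\<sigma> \<circ> \<tau>) j)) \<otimes> h (finv (\<sigma> \<circ> \<tau>) j)) \<otimes> r (finv (\<sigma> \<circ> \<tau>) j)))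
     = (\<lambda>j\<in>S. (inv (r j) \<otimes> (g (finv \<sigma> j) \<otimes> r (finv \<sigma> j))) \<otimes>
           (\<lambda>j\<in>S. inv (r j) \<otimes> (h (finv \<tau> j) \<otimes> r (finv \<tau> j))) (inv_into S \<sigma> j))"
  proof (rule restrict_ext)
    fix j assume j: "j \<in> S"
    define l where "l = finv \<sigma> j"
    have l: "l < p" "\<sigma> l = j" "inv_into S \<sigma> j = l" using perm_facts[OF ps] j by (auto simp: l_def)
    define q where "q = finv \<tau> l"
    have q: "q < p" "\<tau> q = l" using perm_facts[OF pt l(1)] by (auto simp: q_def)
    have fq: "finv (\<sigma> \<circ> \<tau>) j = q" by (simp add: fo q_def l_def)
    have cs: "r j \<in> carrier G" "r l \<in> carrier G" "r q \<in> carrier G" "g l \<in> carrier G" "h q \<in> carrier G"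
      using r_spec j l q g h by (auto simp: good_def)
    show "inv (r j) \<otimes> ((g (\<tau> (finv (\<sigma> \<circ> \<tau>) j)) \<otimes> h (finv (\<sigma> \<circ> \<tau>) j)) \<otimes> r (finv (\<sigma> \<circ> \<tau>) j))
     = (inv (r j) \<otimes> (g (finv \<sigma> j) \<otimes> r (finv \<sigma> j))) \<otimes>
           (\<lambda>j\<in>S. inv (r j) \<otimes> (h (finv \<tau> j) \<otimes> r (finv \<tau> j))) (inv_into S \<sigma> j)"
      unfolding fq l(3) q(2) l_def[symmetric] q_def[symmetric]
      using l(1) cs by (simp add: m_assoc cancel1 q_def[symmetric])
  qed
  then show ?thesis
    unfolding c(2) Phi_mk[OF c(1)] Phi_mk[OF g] Phi_mk[OF h]
    by (simp add: perm_semidirect_def) (rule restrict_ext, simp)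
qed

end

context lvl begin

lemma level_obtain:
  assumes "\<gamma> \<in> full_group_level G Gs n"
  obtains g \<sigma> where "good g \<sigma>" "\<gamma> = mk g"
  using level_rep[OF assms] by blast

lemma Phi_inj: "inj_on Phi (full_group_level G Gs n)"
proof (rule inj_onI)
  fix \<gamma> \<delta> assume a: "\<gamma> \<in> full_group_level G Gs n" "\<delta> \<in> full_group_level G Gs n" "Phi \<gamma> = Phi \<delta>"
  obtain g \<sigma> where g: "good g \<sigma>" "\<gamma> = mk g" using level_obtain[OF a(1)] by blast
  obtain h \<tau> where h: "good h \<tau>" "\<delta> = mk h" using level_obtain[OF a(2)] by blast
  have eq: "(\<lambda>j\<in>S. inv (r j) \<otimes> (g (finv \<sigma> j) \<otimes> r (finv \<sigma> j))) = (\<lambda>j\<in>S. inv (r j) \<otimes> (h (finv \<tau> j) \<otimes> r (finv \<tau> j)))"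
    and st: "\<sigma> = \<tau>"
    using a(3) unfolding g(2) h(2) Phi_mk[OF g(1)] Phi_mk[OF h(1)] by auto
  have ps: "\<sigma> permutes S" using g by (simp add: good_def)
  have "mk g = mk h"
  proof (rule mk_cong)
    fix i assume i: "i < p"
    define j where "j = \<sigma> i"
    have j: "j \<in> S" "finv \<sigma> j = i" using good_lt[OF g(1) i] permutes_inverses(2)[OF ps] by (auto simp: j_def)
    have "inv (r j) \<otimes> (g i \<otimes> r i) = inv (r j) \<otimes> (h i \<otimes> r i)"
      using fun_cong[OF eq, of j] j st by simp
    moreover have "r j \<in> carrier G" "r i \<in> carrier G" "g i \<in> carrier G" "h i \<in> carrier G"
      using r_spec i j g h by (auto simp: good_def)
    ultimately show "g i = h i" by simp
  qed
  then show "\<gamma> = \<delta>" using g h by simp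
qed

lemma Phi_surj: "carrier SD \<subseteq> Phi ` full_group_level G Gs n"
proof
  fix z assume z: "z \<in> carrier SD"
  obtain a \<sigma> where z': "z = (a, \<sigma>)" "a \<in> S \<rightarrow>\<^sub>E Gs n" "\<sigma> permutes S"
    using z by (auto simp: perm_semidirect_def)
  define k where "k i = r (\<sigma> i) \<otimes> (a (\<sigma> i) \<otimes> inv (r i))" for i
  have asub: "j \<in> S \<Longrightarrow> a j \<in> carrier G" for j using z'(2) subgroup.subset[OF sub, of n] by (meson PiE_mem subsetD)
  have k: "good k \<sigma>"
    unfolding good_def
  proof (intro conjI allI impI)
    show "\<sigma> permutes S" by (rule z'(3))
    fix i assume i: "i < p"
    have si: "\<sigma> i \<in> S" using permutes_in_image[OF z'(3)] i by simp
    have cs: "r i \<in> carrier G" "r (\<sigma> i) \<in> carrier G" "a (\<sigma> i) \<in> carrier G" "a (\<sigma> i) \<in> Gs n"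
      using conjunct1[OF r_spec[OF i]] conjunct1[OF r_spec, of "\<sigma> i"] si asub[OF si] PiE_mem[OF z'(2) si] by auto
    show "k i \<in> carrier G" using cs by (simp add: k_def)
    have "k i <# e i = k i <# (r i <# Gs n)" using r_spec[OF i] by simp
    also have "\<dots> = (k i \<otimes> r i) <# Gs n"
      using lcos_m_assoc[OF subgroup.subset[OF sub]] cs by (simp add: k_def)
    also have "k i \<otimes> r i = r (\<sigma> i) \<otimes> a (\<sigma> i)" using cs by (simp add: k_def m_assoc)
    also have "(r (\<sigma> i) \<otimes> a (\<sigma> i)) <# Gs n = r (\<sigma> i) <# Gs n" using coset_absorb cs by simp
    also have "\<dots> = e (\<sigma> i)" using r_spec si by simp
    finally show "k i <# e i = e (\<sigma> i)" .
  qed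
  have "(\<lambda>j\<in>S. inv (r j) \<otimes> (k (finv \<sigma> j) \<otimes> r (finv \<sigma> j))) = a"
  proof
    fix j show "(\<lambda>j\<in>S. inv (r j) \<otimes> (k (finv \<sigma> j) \<otimes> r (finv \<sigma> j))) j = a j"
    proof (cases "j \<in> S")
      case True
      define l where "l = finv \<sigma> j"
      have l: "l < p" "\<sigma> l = j" using perm_facts[OF z'(3)] True by (auto simp: l_def)
      have cs: "r j \<in> carrier G" "r l \<in> carrier G" "a j \<in> carrier G"
        using conjunct1[OF r_spec, of j] conjunct1[OF r_spec[OF l(1)]] True asub[OF True] by auto
      show ?thesis using True cs l by (simp add: l_def[symmetric] k_def m_assoc cancel2)
    next
      case False
      have "a j = undefined" using PiE_arb[OF z'(2) False] .
      then show ?thesis using False by simp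
    qed
  qed
  then have "Phi (mk k) = z" using Phi_mk[OF k] z'(1) by simp
  then show "z \<in> Phi ` full_group_level G Gs n" using mk_level[OF k] by blast
qed

lemma Phi_iso: "Phi \<in> iso FGL SD"
proof -
  have into: "Phi \<in> full_group_level G Gs n \<rightarrow> carrier SD"
  proof
    fix \<gamma> assume "\<gamma> \<in> full_group_level G Gs n"
    then obtain g \<sigma> where "good g \<sigma>" "\<gamma> = mk g" by (rule level_obtain)
    then show "Phi \<gamma> \<in> carrier SD" using Phi_carrier by simp
  qed
  have hom: "Phi \<in> hom FGL SD"
    unfolding hom_def
  proof (intro CollectI conjI ballI)
    show "Phi \<in> carrier FGL \<rightarrow> carrier SD" using into by simp
    fix \<gamma> \<delta> assume a: "\<gamma> \<in> carrier FGL" "\<delta> \<in> carrier FGL"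
    obtain g \<sigma> where g: "good g \<sigma>" "\<gamma> = mk g" using level_obtain a(1) by auto
    obtain h \<tau> where h: "good h \<tau>" "\<delta> = mk h" using level_obtain a(2) by auto
    show "Phi (\<gamma> \<otimes>\<^bsub>FGL\<^esub> \<delta>) = Phi \<gamma> \<otimes>\<^bsub>SD\<^esub> Phi \<delta>"
      using Phi_hom[OF g(1) h(1)] g(2) h(2) by (simp add: full_group_def)
  qed
  have "bij_betw Phi (carrier FGL) (carrier SD)"
    unfolding bij_betw_def using Phi_inj Phi_surj into by auto
  then show ?thesis unfolding iso_def using hom by blast
qed

lemma Phi_atoms: "\<forall>\<gamma> \<in> full_group_level G Gs n. \<forall>i < p. \<gamma> ` atom G Gs n (e i) = atom G Gs n (e (snd (Phi \<gamma>) i))"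
proof (intro ballI allI impI)
  fix \<gamma> i assume a: "\<gamma> \<in> full_group_level G Gs n" "i < p"
  obtain g \<sigma> where g: "good g \<sigma>" "\<gamma> = mk g" using level_obtain[OF a(1)] by blast
  have "snd (Phi \<gamma>) = \<sigma>" using Phi_mk[OF g(1)] g(2) by simp
  then show "\<gamma> ` atom G Gs n (e i) = atom G Gs n (e (snd (Phi \<gamma>) i))"
    using mk_image[OF g(1) a(2)] g(2) by simp
qed

lemma level_subgroup: "subgroup (full_group_level G Gs n) (full_group G Gs)"
proof (rule subgroup.intro)
  show "full_group_level G Gs n \<subseteq> carrier (full_group G Gs)"
    by (auto simp: full_group_def full_group_level_def)
  fix \<gamma> \<delta> assume a: "\<gamma> \<in> full_group_level G Gs n" "\<delta> \<in> full_group_level G Gs n"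
  obtain g \<sigma> where g: "good g \<sigma>" "\<gamma> = mk g" using level_obtain[OF a(1)] by blast
  obtain h \<tau> where h: "good h \<tau>" "\<delta> = mk h" using level_obtain[OF a(2)] by blast
  have c: "good (\<lambda>i. g (\<tau> i) \<otimes> h i) (\<sigma> \<circ> \<tau>)" "mk g \<circ> mk h = mk (\<lambda>i. g (\<tau> i) \<otimes> h i)"
    using good_comp[OF g(1) h(1)] by auto
  have "mk (\<lambda>i. g (\<tau> i) \<otimes> h i) \<in> full_group_level G Gs n" by (rule mk_level[OF c(1)])
  then show "\<gamma> \<otimes>\<^bsub>full_group G Gs\<^esub> \<delta> \<in> full_group_level G Gs n"
    unfolding g(2) h(2) by (simp add: full_group_def c(2))
next
  show "\<one>\<^bsub>full_group G Gs\<^esub> \<in> full_group_level G Gs n"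
    using mk_level[OF good_one] mk_one by (simp add: full_group_def)
next
  fix \<gamma> assume a: "\<gamma> \<in> full_group_level G Gs n"
  obtain g \<sigma> where g: "good g \<sigma>" "\<gamma> = mk g" using level_obtain[OF a] by blast
  have gi: "good (ginv g \<sigma>) (finv \<sigma>)" "mk (ginv g \<sigma>) \<circ> mk g = id" "mk g \<circ> mk (ginv g \<sigma>) = id"
    using good_inv[OF g(1)] by auto
  have "inv\<^bsub>full_group G Gs\<^esub> \<gamma> = mk (ginv g \<sigma>)"
    unfolding m_inv_def
  proof (rule the_equality)
    show "mk (ginv g \<sigma>) \<in> carrier (full_group G Gs) \<and> \<gamma> \<otimes>\<^bsub>full_group G Gs\<^esub> mk (ginv g \<sigma>) = \<one>\<^bsub>full_group G Gs\<^esub>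
        \<and> mk (ginv g \<sigma>) \<otimes>\<^bsub>full_group G Gs\<^esub> \<gamma> = \<one>\<^bsub>full_group G Gs\<^esub>"
      using mk_carrier[OF gi(1)] gi g(2) by (simp add: full_group_def)
    fix y assume "y \<in> carrier (full_group G Gs) \<and> \<gamma> \<otimes>\<^bsub>full_group G Gs\<^esub> y = \<one>\<^bsub>full_group G Gs\<^esub>
        \<and> y \<otimes>\<^bsub>full_group G Gs\<^esub> \<gamma> = \<one>\<^bsub>full_group G Gs\<^esub>"
    then have y: "mk g \<circ> y = id" using g(2) by (simp add: full_group_def)
    have "y = (mk (ginv g \<sigma>) \<circ> mk g) \<circ> y" using gi(2) by simp
    also have "\<dots> = mk (ginv g \<sigma>)" using y by (simp add: o_assoc[symmetric])
    finally show "y = mk (ginv g \<sigma>)" .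
  qed
  then show "inv\<^bsub>full_group G Gs\<^esub> \<gamma> \<in> full_group_level G Gs n" using mk_level[OF gi(1)] by simp
qed

end


theorem proposition4p5:
  fixes G :: "('a, 'b) monoid_scheme" and Gs :: "nat \<Rightarrow> 'a set"
  assumes grp: "group G"
    and normal: "\<And>n. Gs n \<lhd> G"
    and fin_index: "\<And>n. finite (left_cosets G (Gs n))"
    and decr: "\<And>n. Gs (Suc n) \<subseteq> Gs n"
    and free: "free_odometer G Gs"
  shows "(\<forall>n. \<exists>\<phi> e.
            \<phi> \<in> iso ((full_group G Gs)\<lparr>carrier := full_group_level G Gs n\<rparr>)
                    (perm_semidirect (G\<lparr>carrier := Gs n\<rparr>) (card (left_cosets G (Gs n))))
          \<and> bij_betw e {0..<card (left_cosets G (Gs n))} (left_cosets G (Gs n))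
          \<and> (\<forall>\<gamma> \<in> full_group_level G Gs n. \<forall>i < card (left_cosets G (Gs n)).
                \<gamma> ` atom G Gs n (e i) = atom G Gs n (e (snd (\<phi> \<gamma>) i))))
       \<and> (\<forall>n. subgroup (full_group_level G Gs n) (full_group G Gs))
       \<and> (\<forall>n. full_group_level G Gs n \<subseteq> full_group_level G Gs (Suc n))
       \<and> full_group_carrier G Gs = (\<Union>n. full_group_level G Gs n)"
proof -
  interpret odo G Gs using assms by (simp add: odo_def)
  have part1: "\<exists>\<phi> e.
            \<phi> \<in> iso ((full_group G Gs)\<lparr>carrier := full_group_level G Gs n\<rparr>)
                    (perm_semidirect (G\<lparr>carrier := Gs n\<rparr>) (card (left_cosets G (Gs n))))
          \<and> bij_betw e {0..<card (left_cosets G (Gs n))} (left_cosets G (Gs n))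
          \<and> (\<forall>\<gamma> \<in> full_group_level G Gs n. \<forall>i < card (left_cosets G (Gs n)).
                \<gamma> ` atom G Gs n (e i) = atom G Gs n (e (snd (\<phi> \<gamma>) i)))"
       and part2: "subgroup (full_group_level G Gs n) (full_group G Gs)" for n
  proof -
    obtain e where e: "bij_betw e {0..<card (left_cosets G (Gs n))} (left_cosets G (Gs n))"
      using ex_bij_betw_nat_finite[OF fin_index] by blast
    interpret L: lvl G Gs n e by unfold_locales (rule e)
    show "\<exists>\<phi> e.
            \<phi> \<in> iso ((full_group G Gs)\<lparr>carrier := full_group_level G Gs n\<rparr>)
                    (perm_semidirect (G\<lparr>carrier := Gs n\<rparr>) (card (left_cosets G (Gs n))))
          \<and> bij_betw e {0..<card (left_cosets G (Gs n))} (left_cosets G (Gs n))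
          \<and> (\<forall>\<gamma> \<in> full_group_level G Gs n. \<forall>i < card (left_cosets G (Gs n)).
                \<gamma> ` atom G Gs n (e i) = atom G Gs n (e (snd (\<phi> \<gamma>) i)))"
      using L.Phi_iso L.Phi_atoms e by blast
    show "subgroup (full_group_level G Gs n) (full_group G Gs)" by (rule L.level_subgroup)
  qed
  show ?thesis using part1 part2 level_mono full_union by blast
qed

end
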